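(* Let $\mathcal{E}$ be a time-translation covariant channel on $S$, let $\rho$ be a state and $\sigma=\mathcal{E}(\rho)$, and let $P_{x'|x}=\langle x'|\mathcal{E}(|x\rangle\langle x|)|x'\rangle$. Then for all $x',y'$, $$|\sigma_{x'y'}|\le\sum_{x,y:\ E_x-E_y=E_{x'}-E_{y'}}\sqrt{P_{x'|x}P_{y'|y}}\;|\rho_{xy}|,$$ where $\rho_{xy}=\langle x|\rho|y\rangle$ and $\sigma_{x'y'}=\langle x'|\sigma|y'\rangle$.
   Context: $S$ is an $n$-dimensional system with non-degenerate Hamiltonian $H_S=\sum_xE_x|x\rangle\langle x|$. $\mathcal{U}_t(X)=e^{-iH_St}Xe^{iH_St}$. A channel (completely positive trace-preserving map) $\mathcal{E}$ is time-translation covariant if $\mathcal{E}\circ\mathcal{U}_t=\mathcal{U}_t\circ\mathcal{E}$ for all $t\in\mathbb{R}$. *)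

theory Defs
  imports "HOL-Analysis.Analysis"
begin

text \<open>Operators on the n-dimensional system S are represented by their matrix
 in the energy eigenbasis: functions 'n \<Rightarrow> 'n \<Rightarrow> complex with 'n a finite
 index type, n = CARD('n). A x y = <x|A|y>.\<close>

type_synonym 'n op = "'n \<Rightarrow> 'n \<Rightarrow> complex"

definition psd_on :: "'i set \<Rightarrow> ('i \<Rightarrow> 'i \<Rightarrow> complex) \<Rightarrow> bool" where
  "psd_on I A \<longleftrightarrow> (\<forall>v :: 'i \<Rightarrow> complex.
     let q = (\<Sum>i\<in>I. \<Sum>j\<in>I. cnj (v i) * A i j * v j) in Im q = 0 \<and> Re q \<ge> 0)"

definition trace_op :: "('n::finite) op \<Rightarrow> complex" where
  "trace_op A = (\<Sum>i\<in>UNIV. A i i)"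

definition is_state :: "('n::finite) op \<Rightarrow> bool" where
  "is_state \<rho> \<longleftrightarrow> psd_on UNIV \<rho> \<and> trace_op \<rho> = 1"

definition lin_map :: "(('n::finite) op \<Rightarrow> 'n op) \<Rightarrow> bool" where
  "lin_map \<E> \<longleftrightarrow> (\<forall>(c::complex) X Y.
     \<E> (\<lambda>i j. c * X i j + Y i j) = (\<lambda>i j. c * \<E> X i j + \<E> Y i j))"

text \<open>Complete positivity: id_m \<otimes> \<E> is positive for every ancilla dimension m.
 Operators on C^m \<otimes> S are matrices indexed by pairs (i,a), i < m; (id \<otimes> \<E>) acts
 blockwise.\<close>
definition completely_positive :: "(('n::finite) op \<Rightarrow> 'n op) \<Rightarrow> bool" where
  "completely_positive \<E> \<longleftrightarrow> (\<forall>(m::nat) (X :: nat \<times> 'n \<Rightarrow> nat \<times> 'n \<Rightarrow> complex).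
     psd_on ({..<m} \<times> UNIV) X \<longrightarrow>
     psd_on ({..<m} \<times> UNIV)
       (\<lambda>(i, a) (j, b). \<E> (\<lambda>a' b'. X (i, a') (j, b')) a b))"

definition trace_preserving :: "(('n::finite) op \<Rightarrow> 'n op) \<Rightarrow> bool" where
  "trace_preserving \<E> \<longleftrightarrow> (\<forall>X. trace_op (\<E> X) = trace_op X)"

definition channel :: "(('n::finite) op \<Rightarrow> 'n op) \<Rightarrow> bool" where
  "channel \<E> \<longleftrightarrow> lin_map \<E> \<and> completely_positive \<E> \<and> trace_preserving \<E>"

text \<open>U_t(X) = e^{-i H t} X e^{i H t} with H = \<Sum>_x E_x |x><x|, written out entrywise.\<close>
definition evol :: "('n \<Rightarrow> real) \<Rightarrow> real \<Rightarrow> 'n op \<Rightarrow> 'n op" where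
  "evol En t X = (\<lambda>x y. exp (- \<i> * complex_of_real (En x * t)) * X x y
                        * exp (\<i> * complex_of_real (En y * t)))"

definition time_covariant :: "('n \<Rightarrow> real) \<Rightarrow> (('n::finite) op \<Rightarrow> 'n op) \<Rightarrow> bool" where
  "time_covariant En \<E> \<longleftrightarrow> (\<forall>t::real. \<E> \<circ> evol En t = evol En t \<circ> \<E>)"

definition ketbra :: "'n \<Rightarrow> 'n \<Rightarrow> 'n op" where
  "ketbra x y = (\<lambda>i j. if i = x \<and> j = y then 1 else 0)"

definition trans_prob :: "(('n::finite) op \<Rightarrow> 'n op) \<Rightarrow> 'n \<Rightarrow> 'n \<Rightarrow> complex" where
  "trans_prob \<E> x' x = \<E> (ketbra x x) x' x'"

end

theory Submission
  imports Defs
begin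

lemma sum_two_pts:
  assumes "finite I" "p0 \<in> I" "p1 \<in> I" "p0 \<noteq> p1"
  shows "(\<Sum>j\<in>I. (if j = p0 then f j else if j = p1 then h j else (0::complex))) = f p0 + h p1"
proof -
  have I: "I = insert p0 (insert p1 (I - {p0, p1}))" using assms by auto
  have "(\<Sum>j\<in>I. (if j = p0 then f j else if j = p1 then h j else (0::complex)))
      = (\<Sum>j\<in>insert p0 (insert p1 (I - {p0, p1})). (if j = p0 then f j else if j = p1 then h j else (0::complex)))"
    using I by simp
  also have "\<dots> = f p0 + h p1" using assms by (simp add: sum.insert)
  finally show ?thesis .
qed

lemma quad2:
  assumes "finite I" "p0 \<in> I" "p1 \<in> I" "p0 \<noteq> p1"
  shows "(\<Sum>i\<in>I. \<Sum>j\<in>I. cnj ((\<lambda>p. if p = p0 then \<alpha> else if p = p1 then \<beta> else 0) i) * A i j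
            * (\<lambda>p. if p = p0 then \<alpha> else if p = p1 then \<beta> else 0) j)
   = cnj \<alpha> * A p0 p0 * \<alpha> + cnj \<alpha> * A p0 p1 * \<beta> + cnj \<beta> * A p1 p0 * \<alpha> + cnj \<beta> * A p1 p1 * \<beta>"
proof -
  have inner: "(\<Sum>j\<in>I. cnj ((\<lambda>p. if p = p0 then \<alpha> else if p = p1 then \<beta> else 0) i) * A i j
            * (\<lambda>p. if p = p0 then \<alpha> else if p = p1 then \<beta> else 0) j)
     = (if i = p0 then cnj \<alpha> * A i p0 * \<alpha> + cnj \<alpha> * A i p1 * \<beta>
        else if i = p1 then cnj \<beta> * A i p0 * \<alpha> + cnj \<beta> * A i p1 * \<beta> else 0)" for i
  proof -
    have "(\<Sum>j\<in>I. cnj ((\<lambda>p. if p = p0 then \<alpha> else if p = p1 then \<beta> else 0) i) * A i j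
            * (\<lambda>p. if p = p0 then \<alpha> else if p = p1 then \<beta> else 0) j)
        = (\<Sum>j\<in>I. (if j = p0 then (\<lambda>j. cnj ((\<lambda>p. if p = p0 then \<alpha> else if p = p1 then \<beta> else 0) i) * A i j * \<alpha>) j
              else if j = p1 then (\<lambda>j. cnj ((\<lambda>p. if p = p0 then \<alpha> else if p = p1 then \<beta> else 0) i) * A i j * \<beta>) j else 0))"
      by (rule sum.cong) auto
    also have "\<dots> = cnj ((\<lambda>p. if p = p0 then \<alpha> else if p = p1 then \<beta> else 0) i) * A i p0 * \<alpha>
        + cnj ((\<lambda>p. if p = p0 then \<alpha> else if p = p1 then \<beta> else 0) i) * A i p1 * \<beta>"
      by (rule sum_two_pts[OF assms])
    finally show ?thesis using assms(4) by auto
  qed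
  show ?thesis
    apply (simp only: inner)
    apply (subst sum_two_pts[OF assms, where f = "\<lambda>i. cnj \<alpha> * A i p0 * \<alpha> + cnj \<alpha> * A i p1 * \<beta>"
          and h = "\<lambda>i. cnj \<beta> * A i p0 * \<alpha> + cnj \<beta> * A i p1 * \<beta>"])
    by simp
qed

lemma psd2:
  assumes psd: "psd_on I A" and fin: "finite I" and in0: "p0 \<in> I" and in1: "p1 \<in> I" and ne: "p0 \<noteq> p1"
  shows "cmod (A p0 p1) \<le> sqrt (Re (A p0 p0) * Re (A p1 p1))"
proof -
  have Q: "Im (cnj \<alpha> * A p0 p0 * \<alpha> + cnj \<alpha> * A p0 p1 * \<beta> + cnj \<beta> * A p1 p0 * \<alpha> + cnj \<beta> * A p1 p1 * \<beta>) = 0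
     \<and> Re (cnj \<alpha> * A p0 p0 * \<alpha> + cnj \<alpha> * A p0 p1 * \<beta> + cnj \<beta> * A p1 p0 * \<alpha> + cnj \<beta> * A p1 p1 * \<beta>) \<ge> 0" for \<alpha> \<beta>
    using psd[unfolded psd_on_def, rule_format, of "\<lambda>p. if p = p0 then \<alpha> else if p = p1 then \<beta> else 0"]
    unfolding Let_def quad2[OF fin in0 in1 ne] .
  define a where "a = Re (A p0 p0)"
  define b where "b = Re (A p1 p1)"
  define c where "c = A p0 p1"
  have A00: "A p0 p0 = complex_of_real a" using Q[of 1 0] unfolding a_def by (simp add: complex_eq_iff)
  have A11: "A p1 p1 = complex_of_real b" using Q[of 0 1] unfolding b_def by (simp add: complex_eq_iff)
  have "Im (A p0 p1 + A p1 p0) = 0" using Q[of 1 1] A00 A11 by simp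
  moreover have "Re (A p0 p1) - Re (A p1 p0) = 0" using Q[of 1 \<i>] A00 A11 by (simp add: algebra_simps)
  ultimately have A10: "A p1 p0 = cnj c" unfolding c_def by (simp add: complex_eq_iff)
  have key: "a * t^2 - 2 * t * (cmod c)^2 + (cmod c)^2 * b \<ge> 0" for t :: real
  proof -
    have "Re (cnj (complex_of_real t) * A p0 p0 * complex_of_real t + cnj (complex_of_real t) * A p0 p1 * (- cnj c)
       + cnj (- cnj c) * A p1 p0 * complex_of_real t + cnj (- cnj c) * A p1 p1 * (- cnj c)) \<ge> 0"
      using Q by blast
    moreover have "Re (cnj (complex_of_real t) * A p0 p0 * complex_of_real t + cnj (complex_of_real t) * A p0 p1 * (- cnj c)
       + cnj (- cnj c) * A p1 p0 * complex_of_real t + cnj (- cnj c) * A p1 p1 * (- cnj c))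
       = a * t^2 - 2 * t * (cmod c)^2 + (cmod c)^2 * b"
      unfolding A00 A11 A10 c_def[symmetric] cmod_power2
      by (simp add: algebra_simps power2_eq_square)
    ultimately show ?thesis by simp
  qed
  have a0: "a \<ge> 0" using Q[of 1 0] unfolding a_def by simp
  have b0: "b \<ge> 0" using Q[of 0 1] unfolding b_def by simp
  define k where "k = (cmod c)^2"
  have k0: "k \<ge> 0" unfolding k_def by simp
  have kle: "k \<le> a * b"
  proof (cases "k = 0")
    case True then show ?thesis using a0 b0 by simp
  next
    case False
    then have kp: "k > 0" using k0 by simp
    show ?thesis
    proof (cases "a = 0")
      case True
      have "0 \<le> a * ((k*b+1)/(2*k))^2 - 2 * ((k*b+1)/(2*k)) * k + k * b"
        using key[of "(k*b+1)/(2*k)"] unfolding k_def by simp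
      also have "\<dots> = -1" using True kp by (simp add: field_simps)
      finally show ?thesis by simp
    next
      case False
      then have ap: "a > 0" using a0 by simp
      have "0 \<le> a * (k/a)^2 - 2 * (k/a) * k + k * b"
        using key[of "k/a"] unfolding k_def by simp
      also have "\<dots> = k * (b - k / a)" using ap by (simp add: field_simps power2_eq_square)
      finally have "k / a \<le> b" using kp by (simp add: zero_le_mult_iff)
      then show ?thesis using ap by (simp add: field_simps)
    qed
  qed
  have "cmod c = sqrt k" unfolding k_def by simp
  also have "\<dots> \<le> sqrt (a * b)" using kle by simp
  finally show ?thesis unfolding a_def b_def c_def .
qed

lemma cp_bound:
  fixes \<E> :: "('n::finite) op \<Rightarrow> 'n op"
  assumes cp: "completely_positive \<E>"
  shows "cmod (\<E> (ketbra x y) x' y') \<le> sqrt (Re (trans_prob \<E> x' x) * Re (trans_prob \<E> y' y))"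
proof -
  define f :: "nat \<Rightarrow> 'n" where "f i = (if i = 0 then x else y)" for i
  define C :: "nat \<times> 'n \<Rightarrow> bool" where "C p = (fst p < 2 \<and> snd p = f (fst p))" for p
  define X :: "nat \<times> 'n \<Rightarrow> nat \<times> 'n \<Rightarrow> complex"
    where "X p q = (if C p then 1 else 0) * (if C q then 1 else 0)" for p q
  let ?I = "{..<2::nat} \<times> (UNIV :: 'n set)"
  have fin: "finite ?I" by simp
  have psdX: "psd_on ?I X"
    unfolding psd_on_def Let_def
  proof (intro allI)
    fix v :: "nat \<times> 'n \<Rightarrow> complex"
    define s where "s = (\<Sum>q\<in>?I. (if C q then 1 else 0) * v q)"
    have "(\<Sum>i\<in>?I. \<Sum>j\<in>?I. cnj (v i) * X i j * v j)
        = (\<Sum>i\<in>?I. \<Sum>j\<in>?I. (cnj (v i) * (if C i then 1 else 0)) * ((if C j then 1 else 0) * v j))"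
      unfolding X_def by (simp add: algebra_simps)
    also have "\<dots> = (\<Sum>i\<in>?I. (cnj (v i) * (if C i then 1 else 0)) * s)"
      unfolding s_def by (simp add: sum_distrib_left)
    also have "\<dots> = (\<Sum>i\<in>?I. cnj (v i) * (if C i then 1 else 0)) * s"
      by (simp add: sum_distrib_right)
    also have "(\<Sum>i\<in>?I. cnj (v i) * (if C i then 1 else 0)) = cnj s"
      unfolding s_def cnj_sum by (rule sum.cong) auto
    finally have "(\<Sum>i\<in>?I. \<Sum>j\<in>?I. cnj (v i) * X i j * v j) = cnj s * s" .
    also have "\<dots> = complex_of_real ((cmod s)^2)"
      by (simp only: complex_norm_square mult.commute)
    finally show "Im (\<Sum>i\<in>?I. \<Sum>j\<in>?I. cnj (v i) * X i j * v j) = 0 \<and>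
       0 \<le> Re (\<Sum>i\<in>?I. \<Sum>j\<in>?I. cnj (v i) * X i j * v j)" by simp
  qed
  have psdY: "psd_on ?I (\<lambda>(i, a) (j, b). \<E> (\<lambda>a' b'. X (i, a') (j, b')) a b)"
    using cp psdX unfolding completely_positive_def by blast
  have blk: "(\<lambda>a' b'. X (i, a') (j, b')) = ketbra (f i) (f j)" if "i < 2" "j < 2" for i j
    using that unfolding X_def C_def ketbra_def by (auto simp: fun_eq_iff)
  have "cmod ((\<lambda>(i, a) (j, b). \<E> (\<lambda>a' b'. X (i, a') (j, b')) a b) (0, x') (1, y'))
     \<le> sqrt (Re ((\<lambda>(i, a) (j, b). \<E> (\<lambda>a' b'. X (i, a') (j, b')) a b) (0, x') (0, x'))
          * Re ((\<lambda>(i, a) (j, b). \<E> (\<lambda>a' b'. X (i, a') (j, b')) a b) (1, y') (1, y')))"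
    by (rule psd2[OF psdY fin]) auto
  then show ?thesis using blk[of 0 1] blk[of 0 0] blk[of 1 1]
    by (simp add: f_def trans_prob_def)
qed

lemma lin_zero:
  assumes "lin_map \<E>" shows "\<E> (\<lambda>i j. 0) = (\<lambda>i j. 0)"
proof -
  have "\<E> (\<lambda>i j. (-1) * X i j + X i j) = (\<lambda>i j. (-1) * \<E> X i j + \<E> X i j)" for X
    using assms[unfolded lin_map_def, rule_format, of "-1" X X] by simp
  from this[of "\<lambda>i j. 0"] show ?thesis by simp
qed

lemma lin_smult:
  assumes "lin_map \<E>" shows "\<E> (\<lambda>i j. c * X i j) = (\<lambda>i j. c * \<E> X i j)"
proof -
  have "\<E> (\<lambda>i j. c * X i j + 0) = (\<lambda>i j. c * \<E> X i j + \<E> (\<lambda>i j. 0) i j)"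
    using assms[unfolded lin_map_def, rule_format, of c X "\<lambda>i j. 0"] by simp
  then show ?thesis using lin_zero[OF assms] by simp
qed

lemma lin_sum:
  assumes "lin_map \<E>" and "finite S"
  shows "\<E> (\<lambda>i j. \<Sum>p\<in>S. c p * K p i j) = (\<lambda>i j. \<Sum>p\<in>S. c p * \<E> (K p) i j)"
  using assms(2)
proof (induction S rule: finite_induct)
  case empty then show ?case using lin_zero[OF assms(1)] by simp
next
  case (insert a S)
  have "\<E> (\<lambda>i j. \<Sum>p\<in>insert a S. c p * K p i j) = \<E> (\<lambda>i j. c a * K a i j + (\<Sum>p\<in>S. c p * K p i j))"
    using insert by simp
  also have "\<dots> = (\<lambda>i j. c a * \<E> (K a) i j + \<E> (\<lambda>i j. \<Sum>p\<in>S. c p * K p i j) i j)"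
    using assms(1)[unfolded lin_map_def, rule_format, of "c a" "K a" "\<lambda>i j. \<Sum>p\<in>S. c p * K p i j"] by simp
  also have "\<dots> = (\<lambda>i j. \<Sum>p\<in>insert a S. c p * \<E> (K p) i j)"
    using insert by simp
  finally show ?case .
qed

lemma cov_zero:
  fixes \<E> :: "('n::finite) op \<Rightarrow> 'n op"
  assumes lin: "lin_map \<E>" and cov: "time_covariant En \<E>"
    and ne: "En x - En y \<noteq> En x' - En y'"
  shows "\<E> (ketbra x y) x' y' = 0"
proof -
  define a where "a = En x - En y"
  define b where "b = En x' - En y'"
  define t where "t = pi / (a - b)"
  have ab: "a - b \<noteq> 0" using ne unfolding a_def b_def by simp
  define ea where "ea = exp (- \<i> * complex_of_real (a * t))"
  define eb where "eb = exp (- \<i> * complex_of_real (b * t))"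
  have ev: "evol En t (ketbra x y) = (\<lambda>i j. ea * ketbra x y i j)"
  proof (intro ext)
    fix i j
    have "exp (- \<i> * complex_of_real (En x * t)) * exp (\<i> * complex_of_real (En y * t)) = ea"
    proof -
      have "- \<i> * complex_of_real (a * t) = - \<i> * complex_of_real (En x * t) + \<i> * complex_of_real (En y * t)"
        unfolding a_def by (simp add: algebra_simps)
      then show ?thesis unfolding ea_def by (simp only: exp_add)
    qed
    then show "evol En t (ketbra x y) i j = ea * ketbra x y i j"
      unfolding evol_def ketbra_def by auto
  qed
  have "\<E> (evol En t (ketbra x y)) = evol En t (\<E> (ketbra x y))"
    using cov unfolding time_covariant_def by (metis comp_apply)
  then have "\<E> (evol En t (ketbra x y)) x' y' = evol En t (\<E> (ketbra x y)) x' y'" by simp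
  moreover have "\<E> (evol En t (ketbra x y)) x' y' = ea * \<E> (ketbra x y) x' y'"
    unfolding ev lin_smult[OF lin] by simp
  moreover have "evol En t (\<E> (ketbra x y)) x' y' = eb * \<E> (ketbra x y) x' y'"
  proof -
    have "exp (- \<i> * complex_of_real (En x' * t)) * exp (\<i> * complex_of_real (En y' * t)) = eb"
    proof -
      have "- \<i> * complex_of_real (b * t) = - \<i> * complex_of_real (En x' * t) + \<i> * complex_of_real (En y' * t)"
        unfolding b_def by (simp add: algebra_simps)
      then show ?thesis unfolding eb_def by (simp only: exp_add)
    qed
    then show ?thesis unfolding evol_def by (metis mult.commute mult.left_commute)
  qed
  moreover have "ea = - eb"
  proof -
    have "(a - b) * t = pi" unfolding t_def using ab by simp
    then have "a * t = b * t + pi" by (simp add: algebra_simps)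
    then have "ea = eb * exp (- \<i> * complex_of_real pi)"
    proof -
      have "- \<i> * complex_of_real (a * t) = - \<i> * complex_of_real (b * t) + - \<i> * complex_of_real pi"
        using \<open>a * t = b * t + pi\<close> by (simp add: algebra_simps)
      then show ?thesis unfolding ea_def eb_def by (simp only: exp_add)
    qed
    also have "exp (- \<i> * complex_of_real pi) = -1"
      by (metis exp_minus exp_pi_i' inverse_minus_eq inverse_1 mult_minus_left)
    finally show ?thesis by simp
  qed
  moreover have "eb \<noteq> 0" unfolding eb_def by simp
  ultimately show ?thesis by simp
qed

lemma decomp:
  fixes \<rho> :: "('n::finite) op"
  shows "\<rho> = (\<lambda>i j. \<Sum>p\<in>UNIV. \<rho> (fst p) (snd p) * ketbra (fst p) (snd p) i j)"
proof (intro ext)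
  fix i j
  have "(\<Sum>p\<in>UNIV. \<rho> (fst p) (snd p) * ketbra (fst p) (snd p) i j)
      = (\<Sum>p\<in>UNIV. if p = (i, j) then \<rho> (fst p) (snd p) else 0)"
    by (rule sum.cong) (auto simp: ketbra_def)
  also have "\<dots> = \<rho> i j" by simp
  finally show "\<rho> i j = (\<Sum>p\<in>UNIV. \<rho> (fst p) (snd p) * ketbra (fst p) (snd p) i j)" by simp
qed

theorem mainTheorem15:
  fixes En :: "'n::finite \<Rightarrow> real"
    and \<E> :: "'n op \<Rightarrow> 'n op"
    and \<rho> :: "'n op"
    and x' y' :: 'n
  assumes nondeg: "inj En"
    and chan: "channel \<E>"
    and cov: "time_covariant En \<E>"
    and state: "is_state \<rho>"
  shows "cmod (\<E> \<rho> x' y') \<le>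
    (\<Sum>(x, y) \<in> {(x, y). En x - En y = En x' - En y'}.
       sqrt (Re (trans_prob \<E> x' x) * Re (trans_prob \<E> y' y)) * cmod (\<rho> x y))"
proof -
  have lin: "lin_map \<E>" and cp: "completely_positive \<E>" using chan unfolding channel_def by auto
  define S where "S = {(x, y). En x - En y = En x' - En y'}"
  define g where "g p = \<rho> (fst p) (snd p) * \<E> (ketbra (fst p) (snd p)) x' y'" for p
  have "\<E> \<rho> x' y' = \<E> (\<lambda>i j. \<Sum>p\<in>UNIV. \<rho> (fst p) (snd p) * ketbra (fst p) (snd p) i j) x' y'"
    by (subst decomp[of \<rho>]) (rule refl)
  also have "\<dots> = (\<Sum>p\<in>UNIV. g p)"
    unfolding g_def by (subst lin_sum[OF lin]) simp_all
  finally have e: "\<E> \<rho> x' y' = (\<Sum>p\<in>UNIV. g p)" .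
  have "cmod (\<E> \<rho> x' y') \<le> (\<Sum>p\<in>UNIV. cmod (g p))" unfolding e by (rule norm_sum)
  also have "\<dots> = (\<Sum>p\<in>S. cmod (g p))"
  proof (rule sum.mono_neutral_right)
    show "\<forall>p\<in>UNIV - S. cmod (g p) = 0"
      using cov_zero[OF lin cov] unfolding S_def g_def by auto
  qed auto
  also have "\<dots> \<le> (\<Sum>p\<in>S. (\<lambda>(x, y). sqrt (Re (trans_prob \<E> x' x) * Re (trans_prob \<E> y' y)) * cmod (\<rho> x y)) p)"
  proof (rule sum_mono)
    fix p assume "p \<in> S"
    obtain x y where p: "p = (x, y)" by (cases p)
    have "cmod (g p) = cmod (\<rho> x y) * cmod (\<E> (ketbra x y) x' y')"
      unfolding g_def p by (simp add: norm_mult)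
    also have "\<dots> \<le> cmod (\<rho> x y) * sqrt (Re (trans_prob \<E> x' x) * Re (trans_prob \<E> y' y))"
      by (rule mult_left_mono[OF cp_bound[OF cp]]) simp
    finally show "cmod (g p) \<le> (\<lambda>(x, y). sqrt (Re (trans_prob \<E> x' x) * Re (trans_prob \<E> y' y)) * cmod (\<rho> x y)) p"
      unfolding p by (simp add: mult.commute)
  qed
  finally show ?thesis unfolding S_def .
qed

end
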